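(* Let $q$ be an indeterminate and let $l$ be a positive integer. For $(a,b)\in\{(1,1),(1,0),(0,1)\}$ the following identity of formal power series in $z$ holds: \[ \sum_{m\geq0}\sum_{k\geq0} h_{m-2k}(\{1\}^{k+a},\{q\}^{k+b})\left(\frac{q^l}{[l]^2}\right)^k z^m =\frac{[l]^2}{[2l]}\cdot \begin{cases} \dfrac{[l+1]}{[l]-[l+1]z}-\dfrac{q[l-1]}{[l]-q[l-1]z}, & (a,b)=(1,1),\\[2mm] \dfrac{1}{[l]-[l+1]z}+\dfrac{q^l}{[l]-q[l-1]z}, & (a,b)=(1,0),\\[2mm] \dfrac{q^l}{[l]-[l+1]z}+\dfrac{1}{[l]-q[l-1]z}, & (a,b)=(0,1). \end{cases} \]
   Context: For an integer $k\ge 0$, $[k]=\frac{1-q^k}{1-q}$. For integers $r,s\geq0$, $h_n(\{1\}^r,\{x\}^s)$ denotes the $n$-th complete homogeneous symmetric function in $r+s$ variables of which $r$ are specialized to $1$ and $s$ to $x$, i.e. $\sum_{n\geq0}h_n(\{1\}^r,\{x\}^s)z^n=\frac{1}{(1-z)^r(1-xz)^s}$; in particular $h_n=0$ for $n<0$. By convention $h_n(\{1\}^r,\{x\}^s)=0$ if $r<0$ or $s<0$. *)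

theory Defs
  imports "HOL-Computational_Algebra.Computational_Algebra"
begin

type_synonym qfun = "rat poly fract"

definition qvar :: qfun where
  "qvar = Fract [:0, 1:] 1"

definition qint :: "nat \<Rightarrow> qfun" where
  "qint k = (1 - qvar ^ k) / (1 - qvar)"

definition hcomp :: "int \<Rightarrow> nat \<Rightarrow> nat \<Rightarrow> 'a::field \<Rightarrow> 'a" where
  "hcomp n r s x = (if n < 0 then 0
     else fps_nth (inverse ((1 - fps_X) ^ r * (1 - fps_const x * fps_X) ^ s)) (nat n))"

end

theory Submission imports Defs begin
lemma qvar_pow: "qvar ^ k = Fract ([:0,1:]^k) 1"
  by (induction k) (simp_all add: qvar_def One_fract_def mult_fract)
lemma qvar_pow_ne1: "k > 0 \<Longrightarrow> qvar ^ k \<noteq> 1"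
proof
  assume k: "k > 0" and h: "qvar ^ k = 1"
  then have "Fract ([:0,1:]^k) 1 = Fract (1::rat poly) 1" by (simp add: qvar_pow One_fract_def)
  then have "[:0,1:]^k = (1::rat poly)" by (simp add: eq_fract)
  then have "poly ([:0,1:]^k) 0 = poly (1::rat poly) 0" by simp
  then show False using k by (simp add: poly_power zero_power)
qed
lemma qvar_ne1: "qvar \<noteq> 1" using qvar_pow_ne1[of 1] by simp
lemma qint_mult: "qint k * (1 - qvar) = 1 - qvar ^ k"
  using qvar_ne1 by (simp add: qint_def)
lemma qint_ne0: "k > 0 \<Longrightarrow> qint k \<noteq> 0"
  using qvar_ne1 qvar_pow_ne1[of k] by (simp add: qint_def)

lemma ids_gen: fixes x y L M1 M2 T :: "'a::field" assumes w: "1 - x \<noteq> 0" and hL: "L*(1-x)=1-x*y" and h1: "M1*(1-x) = 1-x*x*y"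
  and h2: "M2*(1-x) = x*(1-y)" and hT: "T*(1-x) = 1-x*x*y*y" and L0: "L \<noteq> 0"
shows "M1 - M2 = 1 + x*y" "L * (M1 - M2) = T" "M2 + (x*y) * M1 = x * T" "(x*y) * M2 + M1 = T"
    "L^2 * (1 + x) = L * (M1 + M2)" "L^2 * (x - (x*y) / L^2) = M1 * M2"
proof -
  have c: "a = b" if "a * (1-x)^2 = b * (1-x)^2" for a b :: 'a using that w by simp
  show "M1 - M2 = 1 + x*y" by (rule c) (use hL h1 h2 hT in algebra)
  show "L * (M1 - M2) = T" by (rule c) (use hL h1 h2 hT in algebra)
  show "M2 + (x*y) * M1 = x * T" by (rule c) (use hL h1 h2 hT in algebra)
  show "(x*y) * M2 + M1 = T" by (rule c) (use hL h1 h2 hT in algebra)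
  show "L^2 * (1 + x) = L * (M1 + M2)" by (rule c) (use hL h1 h2 hT in algebra)
  have "L^2 * (x - (x*y) / L^2) = L^2 * x - x*y" using L0 by (simp add: field_simps)
  also have "\<dots> = M1 * M2" by (rule c) (use hL h1 h2 hT in algebra)
  finally show "L^2 * (x - (x*y) / L^2) = M1 * M2" .
qed

lemma ids:
  assumes "l > 0"
  defines "L \<equiv> qint l" and "M1 \<equiv> qint (l+1)" and "M2 \<equiv> qvar * qint (l - 1)" and "T \<equiv> qint (2*l)"
  shows "M1 - M2 = 1 + qvar^l" "L * (M1 - M2) = T" "M2 + qvar^l * M1 = qvar * T" "qvar^l * M2 + M1 = T"
    "L^2 * (1 + qvar) = L * (M1 + M2)" "L^2 * (qvar - qvar^l / L^2) = M1 * M2"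
proof -
  obtain n where l: "l = Suc n" using assms by (cases l) auto
  have w: "1 - qvar \<noteq> 0" using qvar_ne1 by simp
  have e: "L*(1-qvar) = 1 - qvar*qvar^n" "M1*(1-qvar) = 1 - qvar*qvar*qvar^n"
     "M2*(1-qvar) = qvar * (1 - qvar^n)" "T*(1-qvar) = 1 - qvar*qvar*qvar^n*qvar^n"
    by (simp_all add: L_def M1_def M2_def T_def qint_mult l mult.commute[of 2] power_mult power2_eq_square mult.assoc)
  have e2: "qvar^l = qvar * qvar^n" by (simp add: l)
  have L0: "L \<noteq> 0" using qint_ne0[of l] assms by (simp add: L_def)
  note g = ids_gen[OF w e L0]
  show "M1 - M2 = 1 + qvar^l" "L * (M1 - M2) = T" "M2 + qvar^l * M1 = qvar * T" "qvar^l * M2 + M1 = T"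
    "L^2 * (1 + qvar) = L * (M1 + M2)" "L^2 * (qvar - qvar^l / L^2) = M1 * M2"
    unfolding e2 by (rule g)+
qed
lemma gen:
  fixes x t :: "'a::field" and a b :: nat
  assumes ab: "a \<le> 1" "b \<le> 1"
  shows "((1 - fps_X) * (1 - fps_const x * fps_X) - fps_const t * fps_X^2) *
     Abs_fps (\<lambda>m. \<Sum>k\<le>m. hcomp (int m - 2*int k) (k+a) (k+b) x * t^k)
     = (1-fps_X)^(1-a) * (1 - fps_const x * fps_X)^(1-b)"
proof -
  define P :: "'a fps" where "P = (1 - fps_X) * (1 - fps_const x * fps_X)"
  define C :: "'a fps" where "C = fps_const t * fps_X^2"
  define N :: "'a fps" where "N = (1-fps_X)^(1-a) * (1 - fps_const x * fps_X)^(1-b)"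
  define Q where "Q k = ((1 - fps_X)^(k+a) * (1 - fps_const x * fps_X)^(k+b) :: 'a fps)" for k
  define G where "G k = inverse (Q k)" for k
  define A where "A k = fps_const (t^k) * (fps_X^(2*k) * G k)" for k
  define F where "F = Abs_fps (\<lambda>m. \<Sum>k\<le>m. hcomp (int m - 2*int k) (k+a) (k+b) x * t^k)"
  have Anth: "A k $ m = hcomp (int m - 2*int k) (k+a) (k+b) x * t^k" for k m
  proof (cases "m < 2*k")
    case True
    then show ?thesis by (simp add: A_def fps_X_power_mult_nth hcomp_def)
  next
    case False
    then have "nat (int m - 2*int k) = m - 2*k" by simp
    then show ?thesis using False
      by (simp add: A_def fps_X_power_mult_nth hcomp_def G_def Q_def mult.commute)
  qed
  have Alow: "j < 2*k \<Longrightarrow> A k $ j = 0" for j k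
    by (simp add: Anth hcomp_def)
  have Fnth: "F $ m = (\<Sum>k\<le>M. A k) $ m" if "m \<le> M" for m M
  proof -
    have "F $ m = (\<Sum>k\<le>m. A k $ m)" by (simp add: F_def Anth)
    also have "\<dots> = (\<Sum>k\<le>M. A k $ m)"
      by (rule sum.mono_neutral_left) (use that Alow in auto)
    finally show ?thesis by (simp add: fps_sum_nth)
  qed
  have P0: "P $ 0 = 1" by (simp add: P_def)
  have PP: "P * inverse P = 1" using P0 by (intro inverse_mult_eq_1') simp
  have Q0: "Q k $ 0 = 1" for k by (simp add: Q_def fps_power_zeroth)
  have QS: "Q (Suc k) = Q k * P" for k
    by (simp only: Q_def P_def add_Suc power_Suc mult_ac)
  have PG: "P * G (Suc k) = G k" for k
  proof -
    have "P * G (Suc k) = (P * inverse P) * G k" by (simp only: G_def QS fps_inverse_mult mult_ac)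
    then show ?thesis by (simp add: PP)
  qed
  have NQ: "N * Q 0 = P"
  proof -
    have "N * Q 0 = (1-fps_X)^(1-a+a) * (1 - fps_const x * fps_X)^(1-b+b)"
      by (simp add: N_def Q_def power_add algebra_simps)
    also have "\<dots> = P" using ab by (simp add: P_def)
    finally show ?thesis .
  qed
  have PA0: "P * A 0 = N"
  proof -
    have "P * A 0 = N * (Q 0 * inverse (Q 0))" by (simp add: A_def G_def NQ[symmetric] mult.assoc)
    also have "\<dots> = N" using Q0 by (simp add: inverse_mult_eq_1')
    finally show ?thesis .
  qed
  have PAS: "P * A (Suc k) = C * A k" for k
  proof -
    have e: "fps_X^(2*Suc k) = fps_X^2 * (fps_X^(2*k) :: 'a fps)" by (simp add: power_add[symmetric])
    have "P * A (Suc k) = fps_const t * fps_X^2 * (fps_const (t^k) * (fps_X^(2*k) * (P * G (Suc k))))"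
      unfolding A_def e by (simp only: power_Suc fps_const_mult[symmetric] mult_ac)
    also have "\<dots> = C * A k" by (simp only: PG C_def A_def)
    finally show ?thesis .
  qed
  have tele: "(\<Sum>k\<le>n. (P - C) * A k) = N - C * A n" for n
  proof (induction n)
    case 0 then show ?case by (simp add: algebra_simps PA0)
  next
    case (Suc n) then show ?case by (simp add: algebra_simps PAS)
  qed
  have CA: "(C * A m) $ m = 0" for m
    by (simp add: C_def mult.assoc fps_X_power_mult_nth Alow)
  have "(P - C) * F = N"
  proof (rule fps_ext)
    fix m
    have "((P - C) * F) $ m = (\<Sum>i=0..m. (P - C) $ i * F $ (m - i))" by (simp add: fps_mult_nth)
    also have "\<dots> = (\<Sum>i=0..m. (P - C) $ i * (\<Sum>k\<le>m. A k) $ (m - i))"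
      by (intro sum.cong refl) (simp add: Fnth)
    also have "\<dots> = ((P - C) * (\<Sum>k\<le>m. A k)) $ m" by (simp add: fps_mult_nth)
    also have "\<dots> = (N - C * A m) $ m" by (simp add: sum_distrib_left tele)
    also have "\<dots> = N $ m" using CA by simp
    finally show "((P - C) * F) $ m = N $ m" .
  qed
  then show ?thesis by (simp add: P_def C_def F_def N_def)
qed


lemma fc: "a = b \<Longrightarrow> fps_const a = fps_const b" by simp

theorem lemma2p1:
  fixes l a b :: nat
  assumes "l > 0"
    and "(a, b) \<in> {(1, 1), (1, 0), (0, 1)}"
  shows "Abs_fps (\<lambda>m. \<Sum>k\<le>m. hcomp (int m - 2 * int k) (k + a) (k + b) qvar
                              * (qvar ^ l / (qint l)\<^sup>2) ^ k)
       = fps_const ((qint l)\<^sup>2 / qint (2 * l)) *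
         (if (a, b) = (1, 1) then
            fps_const (qint (l + 1)) / (fps_const (qint l) - fps_const (qint (l + 1)) * fps_X)
            - fps_const (qvar * qint (l - 1)) / (fps_const (qint l) - fps_const (qvar * qint (l - 1)) * fps_X)
          else if (a, b) = (1, 0) then
            1 / (fps_const (qint l) - fps_const (qint (l + 1)) * fps_X)
            + fps_const (qvar ^ l) / (fps_const (qint l) - fps_const (qvar * qint (l - 1)) * fps_X)
          else
            fps_const (qvar ^ l) / (fps_const (qint l) - fps_const (qint (l + 1)) * fps_X)
            + 1 / (fps_const (qint l) - fps_const (qvar * qint (l - 1)) * fps_X))"
  proof -
  define L where "L = qint l"
  define M1 where "M1 = qint (l+1)"
  define M2 where "M2 = qvar * qint (l - 1)"
  define T where "T = qint (2*l)"
  define K where "K = L^2 / T"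
  define t where "t = qvar^l / L^2"
  define E1 where "E1 = fps_const L - fps_const M1 * fps_X"
  define E2 where "E2 = fps_const L - fps_const M2 * fps_X"
  define D where "D = (1 - fps_X) * (1 - fps_const qvar * fps_X) - fps_const t * fps_X^2"
  define F where "F = Abs_fps (\<lambda>m. \<Sum>k\<le>m. hcomp (int m - 2 * int k) (k + a) (k + b) qvar * t ^ k)"
  note I = ids[OF assms(1), folded L_def M1_def M2_def T_def]
  have L0: "L \<noteq> 0" using qint_ne0 assms(1) by (simp add: L_def)
  have T0: "T \<noteq> 0" using qint_ne0 assms(1) by (simp add: T_def)
  have E1i: "inverse E1 * E1 = 1" using L0 by (intro inverse_mult_eq_1) (simp add: E1_def)
  have E2i: "inverse E2 * E2 = 1" using L0 by (intro inverse_mult_eq_1) (simp add: E2_def)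
  have E10: "E1 $ 0 \<noteq> 0" "E2 $ 0 \<noteq> 0" using L0 by (simp_all add: E1_def E2_def)
  have KT: "K * T = L * L" using T0 by (simp add: K_def power2_eq_square)
  have s1: "K * L * (1 + qvar^l) = L * L" using KT I(1,2) by (metis mult.assoc)
  have s2: "K * (M2 + qvar^l * M1) = L * L * qvar" using KT I(3) by (metis mult.commute mult.left_commute)
  have s3: "K * (qvar^l * M2 + M1) = L * L" using KT I(4) by metis
  have cL: "fps_const L * fps_const L * (1 + fps_const qvar) = fps_const L * (fps_const M1 + fps_const M2)"
    using fc[OF I(5)] by (simp only: power2_eq_square fps_const_mult[symmetric] fps_const_add[symmetric] fps_const_1_eq_1)
  have ct: "fps_const L * fps_const L * (fps_const qvar - fps_const t) = fps_const M1 * fps_const M2"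
    using fc[OF I(6)] by (simp only: t_def power2_eq_square fps_const_mult[symmetric] fps_const_sub[symmetric])
  have DE: "fps_const L * fps_const L * D = E1 * E2"
    unfolding D_def E1_def E2_def using cL ct by algebra
  have D0: "D \<noteq> 0"
  proof
    assume "D = 0" then have "D $ 0 = 0" by simp
    then show False by (simp add: D_def)
  qed
  have DF: "D * F = (1-fps_X)^(1-a) * (1 - fps_const qvar * fps_X)^(1-b)"
    unfolding D_def F_def by (rule gen) (use assms(2) in auto)
  have key: "R = F" if h: "R * (E1 * E2) = fps_const L * fps_const L * ((1-fps_X)^(1-a) * (1 - fps_const qvar * fps_X)^(1-b))" for R
  proof -
    have "(fps_const L * fps_const L * D) * R = (fps_const L * fps_const L * D) * F"
    proof -
      have "(fps_const L * fps_const L * D) * R = R * (E1 * E2)" unfolding DE by (rule mult.commute)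
      also have "\<dots> = fps_const L * fps_const L * (D * F)" by (simp only: h DF)
      finally show ?thesis by (simp only: mult.assoc)
    qed
    moreover have "fps_const L * fps_const L * D \<noteq> 0" using L0 D0 by (simp add: fps_const_nonzero_eq_nonzero)
    ultimately show ?thesis by simp
  qed
  have c1: "fps_const K * fps_const L * (1 + fps_const (qvar^l)) = fps_const L * fps_const L"
    using fc[OF s1] by (simp only: fps_const_mult[symmetric] fps_const_add[symmetric] fps_const_1_eq_1)
  have c2: "fps_const K * (fps_const M2 + fps_const (qvar^l) * fps_const M1) = fps_const L * fps_const L * fps_const qvar"
    using fc[OF s2] by (simp only: fps_const_mult[symmetric] fps_const_add[symmetric])
  have c3: "fps_const K * (fps_const (qvar^l) * fps_const M2 + fps_const M1) = fps_const L * fps_const L"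
    using fc[OF s3] by (simp only: fps_const_mult[symmetric] fps_const_add[symmetric])
  have c0: "fps_const K * fps_const L * (fps_const M1 - fps_const M2) = fps_const L * fps_const L"
    using fc[OF s1[folded I(1)]] by (simp only: fps_const_mult[symmetric] fps_const_sub[symmetric])
  note U = L_def[symmetric] M1_def[symmetric] M2_def[symmetric] T_def[symmetric] K_def[symmetric]
      t_def[symmetric] E1_def[symmetric] E2_def[symmetric] F_def[symmetric]
  from assms(2) consider "a = 1" "b = 1" | "a = 1" "b = 0" | "a = 0" "b = 1" by auto
  then show ?thesis
  proof cases
      case 1
      have "fps_const K * (fps_const M1 * inverse E1 - fps_const M2 * inverse E2) * (E1*E2)
          = fps_const K * (fps_const M1 * E2 - fps_const M2 * E1)" using E1i E2i by algebra
      also have "\<dots> = fps_const L * fps_const L" unfolding E1_def E2_def using c0 by algebra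
      finally have X: "fps_const K * (fps_const M1 * inverse E1 - fps_const M2 * inverse E2) * (E1*E2) = fps_const L * fps_const L" .
      show ?thesis unfolding U apply (rule key[symmetric]) using X 1 E10 by (simp add: fps_divide_unit)
    next
      case 2
      have "fps_const K * (1 * inverse E1 + fps_const (qvar^l) * inverse E2) * (E1*E2)
          = fps_const K * (E2 + fps_const (qvar^l) * E1)" using E1i E2i by algebra
      also have "\<dots> = fps_const L * fps_const L * (1 - fps_const qvar * fps_X)"
        unfolding E1_def E2_def using c1 c2 c0 by algebra
      finally have X: "fps_const K * (1 * inverse E1 + fps_const (qvar^l) * inverse E2) * (E1*E2) = fps_const L * fps_const L * (1 - fps_const qvar * fps_X)" .
      show ?thesis unfolding U apply (rule key[symmetric]) using X 2 E10 by (simp add: fps_divide_unit)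
    next
      case 3
      have "fps_const K * (fps_const (qvar^l) * inverse E1 + 1 * inverse E2) * (E1*E2)
          = fps_const K * (fps_const (qvar^l) * E2 + E1)" using E1i E2i by algebra
      also have "\<dots> = fps_const L * fps_const L * (1 - fps_X)"
        unfolding E1_def E2_def using c1 c3 c0 by algebra
      finally have X: "fps_const K * (fps_const (qvar^l) * inverse E1 + 1 * inverse E2) * (E1*E2) = fps_const L * fps_const L * (1 - fps_X)" .
      show ?thesis unfolding U apply (rule key[symmetric]) using X 3 E10 by (simp add: fps_divide_unit)
    qed
qed

end
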